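(* Let $G$ be a good finite group and let $N$ be a normal subgroup of $G$ with $N\cong\mathbb Z_2$. If $G/N$ possesses a complete mapping, then $G$ possesses a complete mapping.
   Context: A finite group is called good if its Sylow-2 subgroup is trivial or noncyclic (and bad if its Sylow-2 subgroup is nontrivial and cyclic). A complete mapping of a group $G$ is a bijection $\phi:G\to G$ such that $g\mapsto g\phi(g)$ is also a bijection of $G$; equivalently, there are an index set $I$ and bijections $a,b,c:I\to G$ with $a(i)b(i)=c(i)$ for all $i\in I$. *)

theory Defs
  imports "HOL-Algebra.Algebra"
begin

definition sylow2_subgroup :: "('a, 'b) monoid_scheme \<Rightarrow> 'a set \<Rightarrow> bool" where
  "sylow2_subgroup G P \<longleftrightarrow> subgroup P G \<and>
     (\<exists>a::nat. card P = 2 ^ a \<and> 2 ^ a dvd order G \<and> \<not> 2 ^ (Suc a) dvd order G)"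

text \<open>Good: every Sylow 2-subgroup is trivial or noncyclic (all Sylow 2-subgroups are conjugate).\<close>
definition good_group :: "('a, 'b) monoid_scheme \<Rightarrow> bool" where
  "good_group G \<longleftrightarrow> (\<forall>P. sylow2_subgroup G P \<longrightarrow>
      P = {\<one>\<^bsub>G\<^esub>} \<or> \<not> cyclic_group (G\<lparr>carrier := P\<rparr>))"

definition complete_mapping :: "('a, 'b) monoid_scheme \<Rightarrow> ('a \<Rightarrow> 'a) \<Rightarrow> bool" where
  "complete_mapping G \<phi> \<longleftrightarrow> bij_betw \<phi> (carrier G) (carrier G) \<and>
     bij_betw (\<lambda>g. g \<otimes>\<^bsub>G\<^esub> \<phi> g) (carrier G) (carrier G)"

definition has_complete_mapping :: "('a, 'b) monoid_scheme \<Rightarrow> bool" where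
  "has_complete_mapping G \<longleftrightarrow> (\<exists>\<phi>. complete_mapping G \<phi>)"

end

theory Submission
  imports Defs
begin

lemma two_inv_coloring:
  assumes "finite A"
    and "\<forall>p\<in>A. i1 p \<in> A \<and> i1 p \<noteq> p \<and> i1 (i1 p) = p"
    and "\<forall>p\<in>A. i2 p \<in> A \<and> i2 p \<noteq> p \<and> i2 (i2 p) = p"
  shows "\<exists>\<sigma>::_ \<Rightarrow> bool. \<forall>p\<in>A. \<sigma> (i1 p) \<noteq> \<sigma> p \<and> \<sigma> (i2 p) \<noteq> \<sigma> p"
  using assms
proof (induction "card A" arbitrary: A i2 rule: less_induct)
  case less
  show ?case
  proof (cases "A = {}")
    case True then show ?thesis by simp
  next
    case False
    then obtain p where p: "p \<in> A" by blast
    define q where "q = i1 p"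
    have q: "q \<in> A" "q \<noteq> p" "i1 q = p" using less.prems p q_def by auto
    define A' where "A' = A - {p, q}"
    have cA: "card A' < card A" unfolding A'_def
      using p q less.prems(1) by (intro psubset_card_mono) auto
    have fA: "finite A'" using less.prems(1) A'_def by auto
    have h1: "\<forall>x\<in>A'. i1 x \<in> A' \<and> i1 x \<noteq> x \<and> i1 (i1 x) = x"
    proof
      fix x assume x: "x \<in> A'"
      have a: "i1 x \<in> A" "i1 x \<noteq> x" "i1 (i1 x) = x" using less.prems(2) x A'_def by auto
      have "i1 x \<noteq> p" using a q q_def x A'_def by auto
      moreover have "i1 x \<noteq> q" using a q q_def x A'_def by auto
      ultimately show "i1 x \<in> A' \<and> i1 x \<noteq> x \<and> i1 (i1 x) = x" using a A'_def by auto
    qed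
    show ?thesis
    proof (cases "i2 p = q")
      case True
      have i2q: "i2 q = p" using True less.prems(3) p by metis
      have h2: "\<forall>x\<in>A'. i2 x \<in> A' \<and> i2 x \<noteq> x \<and> i2 (i2 x) = x"
      proof
        fix x assume x: "x \<in> A'"
        have a: "i2 x \<in> A" "i2 x \<noteq> x" "i2 (i2 x) = x" using less.prems(3) x A'_def by auto
        have "i2 x \<noteq> p" using a True i2q x A'_def by auto
        moreover have "i2 x \<noteq> q" using a True i2q x A'_def by auto
        ultimately show "i2 x \<in> A' \<and> i2 x \<noteq> x \<and> i2 (i2 x) = x" using a A'_def by auto
      qed
      obtain \<sigma> :: "_ \<Rightarrow> bool" where s: "\<forall>x\<in>A'. \<sigma> (i1 x) \<noteq> \<sigma> x \<and> \<sigma> (i2 x) \<noteq> \<sigma> x"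
        using less.hyps[OF cA fA h1 h2] by blast
      define \<tau> where "\<tau> = \<sigma>(p := True, q := False)"
      have "\<forall>x\<in>A. \<tau> (i1 x) \<noteq> \<tau> x \<and> \<tau> (i2 x) \<noteq> \<tau> x"
      proof
        fix x assume x: "x \<in> A"
        show "\<tau> (i1 x) \<noteq> \<tau> x \<and> \<tau> (i2 x) \<noteq> \<tau> x"
        proof (cases "x \<in> A'")
          case True
          have s1: "\<sigma> (i1 x) \<noteq> \<sigma> x" "\<sigma> (i2 x) \<noteq> \<sigma> x" using s True by auto
          have "i1 x \<in> A'" "i2 x \<in> A'" using h1 h2 True by auto
          then have "i1 x \<notin> {p,q}" "i2 x \<notin> {p,q}" "x \<notin> {p,q}" using True A'_def by auto
          then show ?thesis using s1 unfolding \<tau>_def by auto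
        next
          case False
          then have "x = p \<or> x = q" using x A'_def by auto
          then show ?thesis using q True i2q q_def unfolding \<tau>_def by auto
        qed
      qed
      then show ?thesis by blast
    next
      case False
      define r where "r = i2 p"
      define q' where "q' = i2 q"
      have r: "r \<in> A" "r \<noteq> p" "r \<noteq> q" "i2 r = p" using less.prems(3) p False r_def by auto
      have q': "q' \<in> A" "q' \<noteq> q" "q' \<noteq> p" "i2 q' = q" "q' \<noteq> r"
        using less.prems(3) q r q'_def r_def by metis+
      define j where "j = i2(r := q', q' := r)"
      have h2: "\<forall>x\<in>A'. j x \<in> A' \<and> j x \<noteq> x \<and> j (j x) = x"
      proof
        fix x assume x: "x \<in> A'"
        show "j x \<in> A' \<and> j x \<noteq> x \<and> j (j x) = x"
        proof (cases "x = r \<or> x = q'")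
          case True
          then show ?thesis using r q' unfolding j_def A'_def by auto
        next
          case False
          have c: "i2 x \<in> A" "i2 x \<noteq> x" "i2 (i2 x) = x" using less.prems(3) x A'_def by auto
          have xpq: "x \<noteq> p" "x \<noteq> q" using x A'_def by auto
          have "i2 x \<noteq> p" using c(3) r_def False by metis
          moreover have "i2 x \<noteq> q" using c(3) q'_def False by metis
          moreover have "i2 x \<noteq> r" using c(3) r(4) xpq by metis
          moreover have "i2 x \<noteq> q'" using c(3) q'(4) xpq by metis
          moreover note c
          ultimately show ?thesis using False unfolding j_def A'_def by auto
        qed
      qed
      obtain \<sigma> :: "_ \<Rightarrow> bool" where s: "\<forall>x\<in>A'. \<sigma> (i1 x) \<noteq> \<sigma> x \<and> \<sigma> (j x) \<noteq> \<sigma> x"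
        using less.hyps[OF cA fA h1 h2] by blast
      have rA': "r \<in> A'" "q' \<in> A'" using r q' A'_def by auto
      have jr: "j r = q'" using j_def by simp
      define \<tau> where "\<tau> = \<sigma>(p := \<not> \<sigma> r, q := \<sigma> r)"
      have "\<forall>x\<in>A. \<tau> (i1 x) \<noteq> \<tau> x \<and> \<tau> (i2 x) \<noteq> \<tau> x"
      proof
        fix x assume x: "x \<in> A"
        show "\<tau> (i1 x) \<noteq> \<tau> x \<and> \<tau> (i2 x) \<noteq> \<tau> x"
        proof (cases "x \<in> A'")
          case True
          have s1: "\<sigma> (i1 x) \<noteq> \<sigma> x" "\<sigma> (j x) \<noteq> \<sigma> x" using s True by auto
          have "i1 x \<in> A'" "j x \<in> A'" using h1 h2 True by auto
          then have nx: "i1 x \<notin> {p,q}" "j x \<notin> {p,q}" "x \<notin> {p,q}" using True A'_def by auto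
          have a1: "\<tau> (i1 x) \<noteq> \<tau> x" using s1 nx unfolding \<tau>_def by auto
          have a2: "\<tau> (i2 x) \<noteq> \<tau> x"
          proof (cases "x = r \<or> x = q'")
            case True
            moreover have "\<sigma> q' \<noteq> \<sigma> r" using s rA' jr by metis
            ultimately show ?thesis using r q' q unfolding \<tau>_def by auto
          next
            case False
            then have "i2 x = j x" using j_def by auto
            then show ?thesis using s1 nx unfolding \<tau>_def by auto
          qed
          show ?thesis using a1 a2 by blast
        next
          case False
          then have "x = p \<or> x = q" using x A'_def by auto
          moreover have "\<sigma> q' \<noteq> \<sigma> r" using s rA' jr by metis
          moreover have "i1 p = q" "i2 p = r" "i2 q = q'" using q_def r_def q'_def by auto
          ultimately show ?thesis using q(2,3) r(2,3) q'(2,3) unfolding \<tau>_def by auto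
        qed
      qed
      then show ?thesis by blast
    qed
  qed
qed


locale zgrp = group G for G (structure) +
  fixes z :: 'a
  assumes zc: "z \<in> carrier G" and z1: "z \<noteq> \<one>" and zz: "z \<otimes> z = \<one>"
    and zcomm: "\<And>a. a \<in> carrier G \<Longrightarrow> a \<otimes> z = z \<otimes> a"
begin

definition "zp u = (if u then z else \<one>)"

lemma zp_closed[simp]: "zp u \<in> carrier G" by (simp add: zp_def zc)
lemma zp_mult[simp]: "zp u \<otimes> zp v = zp (u \<noteq> v)" by (simp add: zp_def zc zz)
lemma zp_mult'[simp]: "y \<in> carrier G \<Longrightarrow> zp u \<otimes> (zp v \<otimes> y) = zp (u \<noteq> v) \<otimes> y"
  by (simp flip: m_assoc)
lemma zp_False[simp]: "zp False = \<one>" by (simp add: zp_def)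
lemma zp_True: "zp True = z" by (simp add: zp_def)
lemma zp_one[simp]: "(zp w = \<one>) = (\<not> w)" using z1 by (simp add: zp_def)
lemma zp_inj[simp]: "(zp u = zp v) = (u = v)" using z1 by (auto simp: zp_def)
lemma zp_comm: "a \<in> carrier G \<Longrightarrow> zp u \<otimes> a = a \<otimes> zp u"
  using zcomm by (auto simp: zp_def)
lemma zp_comm': "a \<in> carrier G \<Longrightarrow> y \<in> carrier G \<Longrightarrow> zp u \<otimes> (a \<otimes> y) = a \<otimes> (zp u \<otimes> y)"
  by (metis m_assoc zp_closed zp_comm)
lemma z_eq: "z = zp True" by (simp add: zp_def)

end

locale cmx = zgrp G z for G (structure) and z +
  fixes xx :: 'a and Th :: "'a \<Rightarrow> 'a" and col :: "'a \<Rightarrow> bool"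
  assumes fin: "finite (carrier G)"
    and xc: "xx \<in> carrier G" and X1: "xx \<noteq> \<one>" and Xz: "xx \<noteq> z" and XX: "xx \<otimes> xx = \<one> \<or> xx \<otimes> xx = z"
    and Thc: "\<And>a. a \<in> carrier G \<Longrightarrow> Th a \<in> carrier G"
    and Thz: "\<And>a. a \<in> carrier G \<Longrightarrow> Th (a \<otimes> z) = Th a"
    and Thinj: "\<And>a b. a \<in> carrier G \<Longrightarrow> b \<in> carrier G \<Longrightarrow>
        Th b = Th a \<or> Th b = Th a \<otimes> z \<Longrightarrow> b = a \<or> b = a \<otimes> z"
    and Psinj: "\<And>a b. a \<in> carrier G \<Longrightarrow> b \<in> carrier G \<Longrightarrow>
        b \<otimes> Th b = a \<otimes> Th a \<or> b \<otimes> Th b = a \<otimes> Th a \<otimes> z \<Longrightarrow> b = a \<or> b = a \<otimes> z"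
    and colz: "\<And>a. a \<in> carrier G \<Longrightarrow> col (a \<otimes> z) = col a"
    and colX: "\<And>a. a \<in> carrier G \<Longrightarrow> col (a \<otimes> xx) = (col a \<noteq> (xx \<otimes> xx = z))"
    and colTh: "\<And>a b. a \<in> carrier G \<Longrightarrow> b \<in> carrier G \<Longrightarrow>
        Th b = xx \<otimes> Th a \<or> Th b = xx \<otimes> Th a \<otimes> z \<Longrightarrow> col b = (col a \<noteq> (xx \<otimes> xx = z))"
begin

definition "eps = (xx \<otimes> xx = z)"

lemma xxe: "xx \<otimes> xx = zp eps" using XX z1 by (auto simp: eps_def zp_def)
lemma X_not_zp: "xx \<noteq> zp u" using X1 Xz by (auto simp: zp_def)

lemma rcanc: "a \<in> carrier G \<Longrightarrow> b \<in> carrier G \<Longrightarrow> c \<in> carrier G \<Longrightarrow> (a \<otimes> c = b \<otimes> c) = (a = b)"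
  by simp
lemma lcanc: "a \<in> carrier G \<Longrightarrow> b \<in> carrier G \<Longrightarrow> c \<in> carrier G \<Longrightarrow> (c \<otimes> a = c \<otimes> b) = (a = b)"
  by simp

lemma zp_eq_cancel[simp]: "a \<in> carrier G \<Longrightarrow> (a \<otimes> zp u = a \<otimes> zp v) = (u = v)"
  by simp

lemma aX_ne: "a \<in> carrier G \<Longrightarrow> a \<otimes> xx \<otimes> zp u \<noteq> a \<otimes> zp v"
proof
  assume a: "a \<in> carrier G" and e: "a \<otimes> xx \<otimes> zp u = a \<otimes> zp v"
  then have "xx \<otimes> zp u = zp v" by (simp add: m_assoc xc)
  then have "xx \<otimes> zp u \<otimes> zp u = zp v \<otimes> zp u" by simp
  then have "xx = zp (v \<noteq> u)" by (simp add: m_assoc xc)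
  then show False using X_not_zp by blast
qed

lemma Xa_ne: "a \<in> carrier G \<Longrightarrow> xx \<otimes> a \<otimes> zp u \<noteq> a \<otimes> zp v"
proof
  assume a: "a \<in> carrier G" and e: "xx \<otimes> a \<otimes> zp u = a \<otimes> zp v"
  have "xx \<otimes> a \<otimes> zp u = xx \<otimes> zp u \<otimes> a" using a xc by (simp add: m_assoc zp_comm)
  moreover have "a \<otimes> zp v = zp v \<otimes> a" using a by (simp add: zp_comm)
  ultimately have "xx \<otimes> zp u = zp v" using e a xc by simp
  then have "xx \<otimes> zp u \<otimes> zp u = zp v \<otimes> zp u" by simp
  then have "xx = zp (v \<noteq> u)" by (simp add: m_assoc xc)
  then show False using X_not_zp by blast
qed

lemma invX: "inv xx = xx \<otimes> zp eps"
proof (rule inv_equality)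
  have "xx \<otimes> zp eps \<otimes> xx = xx \<otimes> xx \<otimes> zp eps"
    using xc by (simp add: m_assoc zp_comm)
  then show "xx \<otimes> zp eps \<otimes> xx = \<one>" using xxe by simp
qed (use xc in auto)


lemma zp_xx[simp]: "zp u \<otimes> xx = xx \<otimes> zp u" using xc zp_comm by auto
lemma zp_xx'[simp]: "y \<in> carrier G \<Longrightarrow> zp u \<otimes> (xx \<otimes> y) = xx \<otimes> (zp u \<otimes> y)"
  using xc zp_comm' by auto
lemma xx_xx[simp]: "xx \<otimes> xx = zp eps" by (rule xxe)
lemma xx_xx'[simp]: "y \<in> carrier G \<Longrightarrow> xx \<otimes> (xx \<otimes> y) = zp eps \<otimes> y"
  using xc xxe by (simp flip: m_assoc)
lemma zp_Th[simp]: "a \<in> carrier G \<Longrightarrow> zp u \<otimes> Th a = Th a \<otimes> zp u" using Thc zp_comm by auto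
lemma zp_Th'[simp]: "a \<in> carrier G \<Longrightarrow> y \<in> carrier G \<Longrightarrow> zp u \<otimes> (Th a \<otimes> y) = Th a \<otimes> (zp u \<otimes> y)"
  using Thc zp_comm' by auto

lemma c6[simp]: "(xx \<otimes> zp w = zp v) = False"
proof -
  have "xx \<otimes> zp w = zp v \<Longrightarrow> False"
  proof -
    assume "xx \<otimes> zp w = zp v"
    then have "xx \<otimes> zp w \<otimes> zp w = zp v \<otimes> zp w" by simp
    then have "xx = zp (v \<noteq> w)" using xc by (simp add: m_assoc)
    then show False using X_not_zp by blast
  qed
  then show ?thesis by blast
qed
lemma c6'[simp]: "(zp v = xx \<otimes> zp w) = False" using c6 by metis
lemma c7[simp]: "(xx \<otimes> zp w = \<one>) = False" using c6[of w False] by simp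
lemma c7'[simp]: "(\<one> = xx \<otimes> zp w) = False" using c7 by metis

lemma c1[simp]: "a \<in> carrier G \<Longrightarrow> (a = a \<otimes> zp w) = (\<not> w)"
  using zp_eq_cancel[of a False w] by (auto simp del: zp_eq_cancel)
lemma c1'[simp]: "a \<in> carrier G \<Longrightarrow> (a \<otimes> zp w = a) = (\<not> w)"
  using c1 by metis
lemma c2[simp]: "a \<in> carrier G \<Longrightarrow> (a \<otimes> (xx \<otimes> zp v) = a \<otimes> zp w) = False"
  using aX_ne[of a v w] xc by (simp add: m_assoc)
lemma c2'[simp]: "a \<in> carrier G \<Longrightarrow> (a \<otimes> zp w = a \<otimes> (xx \<otimes> zp v)) = False"
  using c2 by metis
lemma c3[simp]: "a \<in> carrier G \<Longrightarrow> (a = a \<otimes> (xx \<otimes> zp v)) = False"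
  using c2[of a v False] by simp
lemma c3'[simp]: "a \<in> carrier G \<Longrightarrow> (a \<otimes> (xx \<otimes> zp v) = a) = False"
  using c3 by metis
lemma c4[simp]: "a \<in> carrier G \<Longrightarrow> (a \<otimes> (xx \<otimes> zp v) = a \<otimes> (xx \<otimes> zp w)) = (v = w)"
  using xc by simp
lemma c5[simp]: "a \<in> carrier G \<Longrightarrow> (xx \<otimes> (a \<otimes> zp v) = a \<otimes> zp w) = False"
  using Xa_ne[of a v w] xc by (simp add: m_assoc)
lemma c5'[simp]: "a \<in> carrier G \<Longrightarrow> (a \<otimes> zp w = xx \<otimes> (a \<otimes> zp v)) = False"
  using c5 by metis

lemma col_zp[simp]: "a \<in> carrier G \<Longrightarrow> col (a \<otimes> zp u) = col a"
  using colz by (cases u) (auto simp: zp_True)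

definition "P a = {y. \<exists>u. y = a \<otimes> zp u \<or> y = a \<otimes> (xx \<otimes> zp u)}"
definition "s a = (SOME y. y \<in> P a)"
definition "inD a \<longleftrightarrow> a = s a \<or> a = s a \<otimes> (xx \<otimes> zp (col (s a)))"

lemma a_in_P: "a \<in> carrier G \<Longrightarrow> a \<in> P a"
  unfolding P_def by (rule CollectI, rule exI[of _ False]) simp

lemma s_in_P: "a \<in> carrier G \<Longrightarrow> s a \<in> P a"
  unfolding s_def using a_in_P by (rule someI)

lemma P_cases: "b \<in> P a \<Longrightarrow> (\<And>u. b = a \<otimes> zp u \<Longrightarrow> Q) \<Longrightarrow> (\<And>u. b = a \<otimes> (xx \<otimes> zp u) \<Longrightarrow> Q) \<Longrightarrow> Q"
  unfolding P_def by blast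

lemma P_I1: "a \<otimes> zp u \<in> P a" unfolding P_def by blast
lemma P_I2: "a \<otimes> (xx \<otimes> zp u) \<in> P a" unfolding P_def by blast

lemma P_carrier: "a \<in> carrier G \<Longrightarrow> b \<in> P a \<Longrightarrow> b \<in> carrier G"
  by (erule P_cases) (auto simp: xc)

lemma P_sub: assumes a: "a \<in> carrier G" and b: "b \<in> P a" shows "P b \<subseteq> P a"
proof
  fix y assume y: "y \<in> P b"
  show "y \<in> P a"
    using b
  proof (rule P_cases)
    fix u assume bu: "b = a \<otimes> zp u"
    show ?thesis using y
    proof (rule P_cases)
      fix v assume "y = b \<otimes> zp v"
      then have "y = a \<otimes> zp (u \<noteq> v)" using bu a by (simp add: m_assoc)
      then show ?thesis by (simp add: P_I1)
    next
      fix v assume "y = b \<otimes> (xx \<otimes> zp v)"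
      then have "y = a \<otimes> (xx \<otimes> zp (u \<noteq> v))" using bu a xc by (simp add: m_assoc)
      then show ?thesis by (simp add: P_I2)
    qed
  next
    fix u assume bu: "b = a \<otimes> (xx \<otimes> zp u)"
    show ?thesis using y
    proof (rule P_cases)
      fix v assume "y = b \<otimes> zp v"
      then have "y = a \<otimes> (xx \<otimes> zp (u \<noteq> v))" using bu a xc by (simp add: m_assoc)
      then show ?thesis by (simp add: P_I2)
    next
      fix v assume "y = b \<otimes> (xx \<otimes> zp v)"
      then have "y = a \<otimes> zp (eps \<noteq> (u \<noteq> v))" using bu a xc by (simp add: m_assoc)
      then show ?thesis by (simp add: P_I1)
    qed
  qed
qed

lemma P_sym: assumes a: "a \<in> carrier G" and b: "b \<in> P a" shows "a \<in> P b"
  using b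
proof (rule P_cases)
  fix u assume "b = a \<otimes> zp u"
  then have "a = b \<otimes> zp u" using a by (simp add: m_assoc)
  then show ?thesis by (simp add: P_I1)
next
  fix u assume "b = a \<otimes> (xx \<otimes> zp u)"
  then have "a = b \<otimes> (xx \<otimes> zp (eps \<noteq> u))" using a xc by (simp add: m_assoc; cases eps; cases u; simp)
  then show ?thesis by (simp add: P_I2)
qed

lemma P_eq: "a \<in> carrier G \<Longrightarrow> b \<in> P a \<Longrightarrow> P b = P a"
  by (meson P_carrier P_sub P_sym subset_antisym)

lemma s_eq: "a \<in> carrier G \<Longrightarrow> b \<in> P a \<Longrightarrow> s b = s a"
  using P_eq s_def by metis

lemma s_carrier: "a \<in> carrier G \<Longrightarrow> s a \<in> carrier G"
  using P_carrier s_in_P by blast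


lemma inD_z: assumes a: "a \<in> carrier G" shows "inD (a \<otimes> zp True) = (\<not> inD a)"
proof -
  have se: "s (a \<otimes> zp True) = s a" using s_eq[OF a P_I1] .
  show ?thesis using s_in_P[OF a]
  proof (rule P_cases)
    fix u assume S: "s a = a \<otimes> zp u"
    show ?thesis unfolding inD_def se S using a xc by (simp add: m_assoc)
  next
    fix u assume S: "s a = a \<otimes> (xx \<otimes> zp u)"
    show ?thesis unfolding inD_def se S using a xc
      by (simp add: m_assoc; cases eps; cases u; simp)
  qed
qed

lemma D_uniq: "a \<in> carrier G \<Longrightarrow> inD a \<Longrightarrow> inD (a \<otimes> zp w) \<Longrightarrow> \<not> w"
  using inD_z by (cases w) auto

lemma inD_xx: assumes d: "d \<in> carrier G" and D: "inD d"
  shows "inD (d \<otimes> (xx \<otimes> zp (col d)))"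
proof -
  have Pd: "d \<otimes> (xx \<otimes> zp (col d)) \<in> P d" by (rule P_I2)
  have se: "s (d \<otimes> (xx \<otimes> zp (col d))) = s d" using s_eq[OF d Pd] .
  have sd: "s d \<in> carrier G" using s_carrier d by blast
  from D[unfolded inD_def] show ?thesis
  proof (elim disjE)
    assume e: "d = s d"
    have "d \<otimes> (xx \<otimes> zp (col d)) = s d \<otimes> (xx \<otimes> zp (col (s d)))" using e by metis
    then show ?thesis unfolding inD_def se by (intro disjI2)
  next
    assume e: "d = s d \<otimes> (xx \<otimes> zp (col (s d)))"
    define S where "S = s d"
    have e': "d = S \<otimes> (xx \<otimes> zp (col S))" unfolding S_def by (rule e)
    have SG: "S \<in> carrier G" unfolding S_def by (rule sd)
    have "col d = (col S \<noteq> eps)"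
    proof -
      have "col d = col (S \<otimes> xx \<otimes> zp (col S))" unfolding e' using SG xc by (simp add: m_assoc)
      also have "\<dots> = col (S \<otimes> xx)" by (rule col_zp[OF m_closed[OF SG xc]])
      also have "\<dots> = (col S \<noteq> eps)" using colX[OF SG] by (simp only: eps_def[symmetric])
      finally show ?thesis .
    qed
    then have "d \<otimes> (xx \<otimes> zp (col d)) = S" unfolding e' using SG xc
      by (simp add: m_assoc; cases eps; cases "col S"; simp)
    then have "d \<otimes> (xx \<otimes> zp (col d)) = s d" unfolding S_def .
    then show ?thesis unfolding inD_def se by (intro disjI1)
  qed
qed


lemma colX': "a \<in> carrier G \<Longrightarrow> col (a \<otimes> xx) = (col a \<noteq> eps)"
  using colX by (simp only: eps_def[symmetric])

lemma ThinjZ: assumes a: "a \<in> carrier G" and b: "b \<in> carrier G" and e: "Th b = Th a \<otimes> zp u"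
  shows "\<exists>w. b = a \<otimes> zp w"
proof -
  have "Th b = Th a \<or> Th b = Th a \<otimes> z" using e a Thc by (cases u) (auto simp: zp_True)
  then have "b = a \<or> b = a \<otimes> z" using Thinj a b by blast
  then show ?thesis using a by (metis r_one zp_False zp_True)
qed

lemma PsinjZ: assumes a: "a \<in> carrier G" and b: "b \<in> carrier G"
  and e: "b \<otimes> Th b = a \<otimes> (Th a \<otimes> zp u)"
  shows "\<exists>w. b = a \<otimes> zp w"
proof -
  have "b \<otimes> Th b = a \<otimes> Th a \<or> b \<otimes> Th b = a \<otimes> Th a \<otimes> z" using e a Thc[OF a] zc
    by (cases u) (auto simp: zp_True m_assoc)
  then have "b = a \<or> b = a \<otimes> z" using Psinj a b by blast
  then show ?thesis using a by (metis r_one zp_False zp_True)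
qed

lemma colTh': assumes a: "a \<in> carrier G" and b: "b \<in> carrier G"
  and e: "Th b = xx \<otimes> (Th a \<otimes> zp w)"
  shows "col b = (col a \<noteq> eps)"
proof -
  have "Th b = xx \<otimes> Th a \<or> Th b = xx \<otimes> Th a \<otimes> z" using e a Thc[OF a] xc zc
    by (cases w) (auto simp: zp_True m_assoc)
  then show ?thesis using colTh[OF a b] by (simp only: eps_def[symmetric])
qed

lemma D_class: "a \<in> carrier G \<Longrightarrow> inD a \<Longrightarrow> inD (a \<otimes> zp w) \<Longrightarrow> a \<otimes> zp w = a"
  using D_uniq by simp

lemma notD_rep: assumes a: "a \<in> carrier G" and nD: "\<not> inD a"
  shows "\<exists>d\<in>carrier G. inD d \<and> a = d \<otimes> (xx \<otimes> zp (\<not> col d))"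
proof -
  define v where "v = (\<not> inD (a \<otimes> xx))"
  define d where "d = a \<otimes> (xx \<otimes> zp v)"
  have dG: "d \<in> carrier G" using a xc d_def by simp
  have "inD d"
  proof (cases "inD (a \<otimes> xx)")
    case True
    then show ?thesis using d_def v_def a xc by (simp add: m_assoc)
  next
    case False
    then have "inD (a \<otimes> xx \<otimes> zp True)" using inD_z[of "a \<otimes> xx"] a xc by simp
    then show ?thesis using d_def v_def a xc False by (simp add: m_assoc)
  qed
  have cd: "col d = (col a \<noteq> eps)" unfolding d_def using a xc
    by (simp add: m_assoc[symmetric] colX' del: zp_xx zp_xx' xx_xx')
  define e where "e = d \<otimes> (xx \<otimes> zp (col d))"
  have De: "inD e" using inD_xx[OF dG \<open>inD d\<close>] e_def by simp
  have ee: "e = a \<otimes> zp (eps \<noteq> (v \<noteq> col d))" unfolding e_def d_def using a xc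
    by (simp add: m_assoc)
  have w: "eps \<noteq> (v \<noteq> col d)"
  proof (rule ccontr)
    assume "\<not> (eps \<noteq> (v \<noteq> col d))"
    then have "e = a" using ee a by simp
    then show False using De nD by simp
  qed
  have "a = d \<otimes> (xx \<otimes> zp (\<not> col d))"
  proof -
    have "d \<otimes> (xx \<otimes> zp (\<not> col d)) = e \<otimes> zp True" unfolding e_def using dG xc
      by (simp add: m_assoc)
    also have "\<dots> = a" using ee w a by (simp add: m_assoc)
    finally show ?thesis by simp
  qed
  then show ?thesis using dG \<open>inD d\<close> by blast
qed


definition "K a = {y. \<exists>u. y = Th a \<otimes> zp u \<or> y = xx \<otimes> (Th a \<otimes> zp u)}"
definition "t a = (SOME y. y \<in> K a)"
definition "Phi a = (if \<exists>u. t a = Th a \<otimes> zp u then t a else xx \<otimes> (t a \<otimes> zp (\<not> col a)))"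

lemma t_in_K: "a \<in> carrier G \<Longrightarrow> t a \<in> K a"
  unfolding t_def K_def
  by (rule someI[of _ "Th a \<otimes> zp False"]) blast

lemma K_cases: "y \<in> K a \<Longrightarrow> (\<And>u. y = Th a \<otimes> zp u \<Longrightarrow> Q) \<Longrightarrow> (\<And>u. y = xx \<otimes> (Th a \<otimes> zp u) \<Longrightarrow> Q) \<Longrightarrow> Q"
  unfolding K_def by blast

lemma Phi_form: assumes a: "a \<in> carrier G" shows "\<exists>u. Phi a = Th a \<otimes> zp u"
  using t_in_K[OF a]
proof (rule K_cases)
  fix u assume "t a = Th a \<otimes> zp u"
  then show ?thesis unfolding Phi_def by auto
next
  fix u assume T: "t a = xx \<otimes> (Th a \<otimes> zp u)"
  have "\<not> (\<exists>v. t a = Th a \<otimes> zp v)" unfolding T using a Thc[OF a] xc by (auto simp: m_assoc)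
  then have "Phi a = Th a \<otimes> zp (eps \<noteq> (u \<noteq> (\<not> col a)))" unfolding Phi_def T using a Thc[OF a] xc
    by (simp add: m_assoc)
  then show ?thesis by blast
qed

lemma Phi_carrier: "a \<in> carrier G \<Longrightarrow> Phi a \<in> carrier G"
  using Phi_form Thc by fastforce

lemma K_sub: assumes a: "a \<in> carrier G" and b: "b \<in> carrier G"
  and e: "Th b = xx \<otimes> (Th a \<otimes> zp w)" shows "K b \<subseteq> K a"
proof
  fix y assume "y \<in> K b"
  then show "y \<in> K a"
  proof (rule K_cases)
    fix u assume "y = Th b \<otimes> zp u"
    then have "y = xx \<otimes> (Th a \<otimes> zp (w \<noteq> u))" using e a Thc[OF a] xc by (simp add: m_assoc)
    then show ?thesis unfolding K_def by blast
  next
    fix u assume "y = xx \<otimes> (Th b \<otimes> zp u)"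
    then have "y = Th a \<otimes> zp (eps \<noteq> (w \<noteq> u))" using e a Thc[OF a] xc by (simp add: m_assoc)
    then show ?thesis unfolding K_def by blast
  qed
qed

lemma Th_back: assumes a: "a \<in> carrier G" and b: "b \<in> carrier G"
  and e: "Th b = xx \<otimes> (Th a \<otimes> zp w)" shows "Th a = xx \<otimes> (Th b \<otimes> zp (eps \<noteq> w))"
  using e a Thc[OF a] xc by (simp add: m_assoc; cases eps; cases w; simp)

lemma t_eq: assumes a: "a \<in> carrier G" and b: "b \<in> carrier G"
  and e: "Th b = xx \<otimes> (Th a \<otimes> zp w)" shows "t b = t a"
proof -
  have "K b = K a" using K_sub[OF a b e] K_sub[OF b a Th_back[OF a b e]] by blast
  then show ?thesis unfolding t_def by simp
qed

lemma Phi_pair: assumes a: "a \<in> carrier G" and b: "b \<in> carrier G"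
  and e: "Th b = xx \<otimes> (Th a \<otimes> zp w)" shows "xx \<otimes> Phi a \<noteq> Phi b \<otimes> zp (col b)"
proof -
  have cb: "col b = (col a \<noteq> eps)" by (rule colTh'[OF a b e])
  have tt: "t b = t a" by (rule t_eq[OF a b e])
  have ThaG: "Th a \<in> carrier G" using Thc[OF a] .
  show ?thesis using t_in_K[OF a]
  proof (rule K_cases)
    fix u assume T: "t a = Th a \<otimes> zp u"
    have Pa: "Phi a = Th a \<otimes> zp u" unfolding Phi_def using T by auto
    have "\<not> (\<exists>v. t b = Th b \<otimes> zp v)" unfolding tt T e using a ThaG xc by (auto simp: m_assoc)
    then have Pb: "Phi b = xx \<otimes> (Th a \<otimes> zp (u \<noteq> (\<not> col b)))" unfolding Phi_def tt T using a ThaG xc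
      by (simp add: m_assoc)
    show ?thesis unfolding Pa Pb using a ThaG xc by (simp add: m_assoc; cases u; cases "col b"; simp)
  next
    fix u assume T: "t a = xx \<otimes> (Th a \<otimes> zp u)"
    have "\<not> (\<exists>v. t a = Th a \<otimes> zp v)" unfolding T using a ThaG xc by (auto simp: m_assoc)
    then have Pa: "Phi a = Th a \<otimes> zp (eps \<noteq> (u \<noteq> (\<not> col a)))" unfolding Phi_def T using a ThaG xc
      by (simp add: m_assoc)
    have "t b = Th b \<otimes> zp (w \<noteq> u)" unfolding tt T e using a ThaG xc by (simp add: m_assoc; cases u; cases w; simp)
    then have Pb: "Phi b = xx \<otimes> (Th a \<otimes> zp u)" unfolding Phi_def tt T by auto
    show ?thesis unfolding Pa Pb cb using a ThaG xc
      by (simp add: m_assoc; cases eps; cases u; cases "col a"; simp)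
  qed
qed


definition "dD a = (SOME d. d \<in> carrier G \<and> inD d \<and> a = d \<otimes> (xx \<otimes> zp (\<not> col d)))"
definition "phi a = (if inD a then Phi a else inv xx \<otimes> (Phi (dD a) \<otimes> zp (col (dD a))))"

lemma dD: assumes "a \<in> carrier G" "\<not> inD a"
  shows "dD a \<in> carrier G" "inD (dD a)" "a = dD a \<otimes> (xx \<otimes> zp (\<not> col (dD a)))"
proof -
  have "\<exists>d. d \<in> carrier G \<and> inD d \<and> a = d \<otimes> (xx \<otimes> zp (\<not> col d))"
    using notD_rep[OF assms] by blast
  then have "dD a \<in> carrier G \<and> inD (dD a) \<and> a = dD a \<otimes> (xx \<otimes> zp (\<not> col (dD a)))"
    unfolding dD_def by (rule someI_ex)
  then show "dD a \<in> carrier G" "inD (dD a)" "a = dD a \<otimes> (xx \<otimes> zp (\<not> col (dD a)))" by auto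
qed

lemma zp_move: "x \<in> carrier G \<Longrightarrow> y \<in> carrier G \<Longrightarrow> (x \<otimes> zp v = y) = (x = y \<otimes> zp v)"
proof
  assume "x \<in> carrier G" "y \<in> carrier G" "x \<otimes> zp v = y"
  then show "x = y \<otimes> zp v" by (auto simp: m_assoc)
next
  assume "x \<in> carrier G" "y \<in> carrier G" "x = y \<otimes> zp v"
  then show "x \<otimes> zp v = y" by (auto simp: m_assoc)
qed

lemma D_eq: assumes d: "d \<in> carrier G" and e: "e \<in> carrier G" and "inD d" "inD e"
  and th: "Th e = Th d \<otimes> zp u" shows "e = d"
proof -
  obtain w where "e = d \<otimes> zp w" using ThinjZ[OF d e th] by blast
  then show ?thesis using D_class[OF d \<open>inD d\<close>] \<open>inD e\<close> by simp
qed

lemma phi_carrier: "a \<in> carrier G \<Longrightarrow> phi a \<in> carrier G"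
  unfolding phi_def using dD Phi_carrier xc by auto

lemma phi_DN: assumes a: "a \<in> carrier G" and b: "b \<in> carrier G" and Da: "inD a" and Db: "\<not> inD b"
  shows "phi a \<noteq> phi b"
proof
  assume eq: "phi a = phi b"
  define d where "d = dD b"
  have dG: "d \<in> carrier G" using dD[OF b Db] d_def by simp
  obtain u where u: "Phi a = Th a \<otimes> zp u" using Phi_form[OF a] by blast
  obtain v where v: "Phi d = Th d \<otimes> zp v" using Phi_form[OF dG] by blast
  have "Phi a = inv xx \<otimes> (Phi d \<otimes> zp (col d))" using eq Da Db unfolding phi_def d_def by simp
  then have e1: "xx \<otimes> Phi a = Phi d \<otimes> zp (col d)"
    using xc Phi_carrier[OF a] Phi_carrier[OF dG] by (simp add: m_assoc[symmetric])
  have "Th d = xx \<otimes> (Th a \<otimes> zp (u \<noteq> (v \<noteq> col d)))"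
  proof -
    have "Th d \<otimes> zp (v \<noteq> col d) = xx \<otimes> (Th a \<otimes> zp u)" using e1 u v Thc[OF dG]
      by (simp add: m_assoc)
    then show ?thesis using Thc[OF dG] Thc[OF a] xc a by (simp add: zp_move m_assoc)
  qed
  from Phi_pair[OF a dG this] e1 show False by simp
qed

lemma phi_inj: "inj_on phi (carrier G)"
proof (rule inj_onI)
  fix a b assume a: "a \<in> carrier G" and b: "b \<in> carrier G" and eq: "phi a = phi b"
  show "a = b"
  proof (cases "inD a")
    case Da: True
    show ?thesis
    proof (cases "inD b")
      case Db: True
      obtain u where u: "Phi a = Th a \<otimes> zp u" using Phi_form[OF a] by blast
      obtain v where v: "Phi b = Th b \<otimes> zp v" using Phi_form[OF b] by blast
      have "Th b \<otimes> zp v = Th a \<otimes> zp u" using eq Da Db u v unfolding phi_def by simp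
      then have "Th b = Th a \<otimes> zp (u \<noteq> v)" using Thc[OF a] Thc[OF b] by (simp add: zp_move m_assoc)
      then show ?thesis using D_eq[OF a b Da Db] by simp
    next
      case Db: False
      then show ?thesis using phi_DN[OF a b Da Db] eq by simp
    qed
  next
    case Da: False
    show ?thesis
    proof (cases "inD b")
      case Db: True
      then show ?thesis using phi_DN[OF b a Db Da] eq by simp
    next
      case Db: False
      define d where "d = dD a"
      define e where "e = dD b"
      have dG: "d \<in> carrier G" "inD d" "a = d \<otimes> (xx \<otimes> zp (\<not> col d))" using dD[OF a Da] d_def by auto
      have eG: "e \<in> carrier G" "inD e" "b = e \<otimes> (xx \<otimes> zp (\<not> col e))" using dD[OF b Db] e_def by auto
      obtain u where u: "Phi d = Th d \<otimes> zp u" using Phi_form[OF dG(1)] by blast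
      obtain v where v: "Phi e = Th e \<otimes> zp v" using Phi_form[OF eG(1)] by blast
      have "inv xx \<otimes> (Phi d \<otimes> zp (col d)) = inv xx \<otimes> (Phi e \<otimes> zp (col e))"
        using eq Da Db unfolding phi_def d_def e_def by simp
      then have "Phi e \<otimes> zp (col e) = Phi d \<otimes> zp (col d)"
        using xc Phi_carrier dG eG by simp
      then have "Th e \<otimes> zp (v \<noteq> col e) = Th d \<otimes> zp (u \<noteq> col d)" using u v Thc dG eG
        by (simp add: m_assoc)
      then have "Th e = Th d \<otimes> zp ((u \<noteq> col d) \<noteq> (v \<noteq> col e))" using Thc dG eG
        by (simp add: zp_move m_assoc)
      then have "e = d" using D_eq dG eG by blast
      then show ?thesis using dG eG by simp
    qed
  qed
qed

lemma psi_N: assumes b: "b \<in> carrier G" and Db: "\<not> inD b"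
  shows "b \<otimes> phi b = dD b \<otimes> (Phi (dD b) \<otimes> zp True)"
proof -
  define d where "d = dD b"
  have dG: "d \<in> carrier G" "inD d" "b = d \<otimes> (xx \<otimes> zp (\<not> col d))" using dD[OF b Db] d_def by auto
  have PG: "Phi d \<in> carrier G" using Phi_carrier dG by simp
  have pb: "phi b = inv xx \<otimes> (Phi d \<otimes> zp (col d))"
    using Db unfolding phi_def d_def by simp
  have "b \<otimes> phi b = d \<otimes> (xx \<otimes> zp (\<not> col d)) \<otimes> (inv xx \<otimes> (Phi d \<otimes> zp (col d)))"
    unfolding pb by (subst dG(3)) (rule refl)
  also have "\<dots> = d \<otimes> (Phi d \<otimes> zp True)"
    using dG PG xc by (simp add: invX m_assoc zp_comm'[of "Phi d"]; cases "col d"; cases eps; simp)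
  finally show ?thesis unfolding d_def .
qed


lemma psi_DD: assumes a: "a \<in> carrier G" and b: "b \<in> carrier G" and Da: "inD a" and Db: "inD b"
  and eq: "a \<otimes> Phi a = b \<otimes> (Phi b \<otimes> zp w)" shows "a = b"
proof -
  obtain u where u: "Phi a = Th a \<otimes> zp u" using Phi_form[OF a] by blast
  obtain v where v: "Phi b = Th b \<otimes> zp v" using Phi_form[OF b] by blast
  have "b \<otimes> (Th b \<otimes> zp (v \<noteq> w)) = a \<otimes> (Th a \<otimes> zp u)" using eq u v a b Thc[OF a] Thc[OF b]
    by (simp add: m_assoc)
  then have "b \<otimes> Th b = a \<otimes> (Th a \<otimes> zp (u \<noteq> (v \<noteq> w)))" using a b Thc[OF a] Thc[OF b]
    by (simp add: m_assoc[symmetric] zp_move del: zp_Th' zp_xx' xx_xx' zp_mult')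
      (simp add: m_assoc; cases u; cases v; cases w; simp)
  then obtain w' where bw: "b = a \<otimes> zp w'" using PsinjZ[OF a b] by blast
  then have "a \<otimes> zp w' = a" using D_class[OF a Da, of w'] Db by simp
  then show ?thesis using bw by simp
qed

lemma psi_inj: "inj_on (\<lambda>g. g \<otimes> phi g) (carrier G)"
proof (rule inj_onI)
  fix a b assume a: "a \<in> carrier G" and b: "b \<in> carrier G" and eq: "a \<otimes> phi a = b \<otimes> phi b"
  show "a = b"
  proof (cases "inD a")
    case Da: True
    show ?thesis
    proof (cases "inD b")
      case Db: True
      have "a \<otimes> Phi a = b \<otimes> (Phi b \<otimes> zp False)" using eq Da Db Phi_carrier[OF b] unfolding phi_def by simp
      then show ?thesis using psi_DD[OF a b Da Db] by blast
    next
      case Db: False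
      define d where "d = dD b"
      have dG: "d \<in> carrier G" "inD d" using dD[OF b Db] d_def by auto
      have "a \<otimes> Phi a = d \<otimes> (Phi d \<otimes> zp True)" using eq Da psi_N[OF b Db] unfolding phi_def d_def by simp
      then have ad: "a = d" using psi_DD[OF a dG(1) Da dG(2)] by blast
      have "a \<otimes> Phi a = a \<otimes> (Phi a \<otimes> zp True)" using eq Da psi_N[OF b Db] unfolding phi_def d_def[symmetric] ad by simp
      then show ?thesis using a Phi_carrier[OF a] by (simp add: m_assoc[symmetric])
    qed
  next
    case Da: False
    define d where "d = dD a"
    have dG: "d \<in> carrier G" "inD d" "a = d \<otimes> (xx \<otimes> zp (\<not> col d))" using dD[OF a Da] d_def by auto
    show ?thesis
    proof (cases "inD b")
      case Db: True
      have "b \<otimes> Phi b = d \<otimes> (Phi d \<otimes> zp True)" using eq Db psi_N[OF a Da] unfolding phi_def d_def by simp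
      then have bd: "b = d" using psi_DD[OF b dG(1) Db dG(2)] by blast
      have "b \<otimes> Phi b = b \<otimes> (Phi b \<otimes> zp True)" using eq Db psi_N[OF a Da] unfolding phi_def d_def[symmetric] bd by simp
      then show ?thesis using b Phi_carrier[OF b] by (simp add: m_assoc[symmetric])
    next
      case Db: False
      define e where "e = dD b"
      have eG: "e \<in> carrier G" "inD e" "b = e \<otimes> (xx \<otimes> zp (\<not> col e))" using dD[OF b Db] e_def by auto
      have "d \<otimes> (Phi d \<otimes> zp True) = e \<otimes> (Phi e \<otimes> zp True)"
        using eq psi_N[OF a Da] psi_N[OF b Db] unfolding d_def e_def by simp
      then have "d \<otimes> Phi d = e \<otimes> (Phi e \<otimes> zp False)" using dG eG Phi_carrier
        by (simp add: m_assoc[symmetric])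
      then have "d = e" using psi_DD[OF dG(1) eG(1) dG(2) eG(2)] by blast
      then show ?thesis using dG(3) eG(3) by simp
    qed
  qed
qed

theorem cm_exists: "\<exists>\<phi>. complete_mapping G \<phi>"
proof -
  have im1: "phi ` carrier G \<subseteq> carrier G" using phi_carrier by auto
  have im2: "(\<lambda>g. g \<otimes> phi g) ` carrier G \<subseteq> carrier G" using phi_carrier by auto
  have "bij_betw phi (carrier G) (carrier G)"
    unfolding bij_betw_def using phi_inj endo_inj_surj[OF fin im1 phi_inj] by blast
  moreover have "bij_betw (\<lambda>g. g \<otimes> phi g) (carrier G) (carrier G)"
    unfolding bij_betw_def using psi_inj endo_inj_surj[OF fin im2 psi_inj] by blast
  ultimately show ?thesis unfolding complete_mapping_def by blast
qed


end

context zgrp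
begin

definition "cls a = {a, a \<otimes> z}"

lemma cls_eq: assumes a: "a \<in> carrier G" and b: "b \<in> carrier G"
  shows "(cls a = cls b) = (\<exists>u. b = a \<otimes> zp u)"
proof
  assume "cls a = cls b"
  then have "b \<in> cls a" unfolding cls_def by blast
  then show "\<exists>u. b = a \<otimes> zp u" unfolding cls_def using a by (metis insertE r_one singletonD zp_False zp_True)
next
  assume "\<exists>u. b = a \<otimes> zp u"
  then obtain u where u: "b = a \<otimes> zp u" by blast
  have "a = b \<otimes> zp u" using u a by (simp add: m_assoc)
  then show "cls a = cls b" unfolding cls_def using u a zc
    by (cases u) (auto simp: zp_True)
qed

lemma col_exists:
  assumes fin: "finite (carrier G)" and xc: "xx \<in> carrier G" and X1: "xx \<noteq> \<one>" and Xz: "xx \<noteq> z"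
   and XX: "xx \<otimes> xx = z"
   and Thc: "\<And>a. a \<in> carrier G \<Longrightarrow> Th a \<in> carrier G"
   and Thz: "\<And>a. a \<in> carrier G \<Longrightarrow> Th (a \<otimes> z) = Th a"
   and Thinj: "\<And>a b. a \<in> carrier G \<Longrightarrow> b \<in> carrier G \<Longrightarrow>
        Th b = Th a \<or> Th b = Th a \<otimes> z \<Longrightarrow> b = a \<or> b = a \<otimes> z"
   and Thsurj: "\<And>c. c \<in> carrier G \<Longrightarrow> \<exists>a\<in>carrier G. Th a = c \<or> Th a = c \<otimes> z"
  shows "\<exists>col. (\<forall>a\<in>carrier G. col (a \<otimes> z) = col a) \<and> (\<forall>a\<in>carrier G. col (a \<otimes> xx) = (\<not> col a)) \<and>
     (\<forall>a\<in>carrier G. \<forall>b\<in>carrier G. (Th b = xx \<otimes> Th a \<or> Th b = xx \<otimes> Th a \<otimes> z) \<longrightarrow> col b = (\<not> col a))"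
proof -
  have ThZ: "Th (a \<otimes> zp u) = Th a" if "a \<in> carrier G" for a u
    using Thz that by (cases u) (auto simp: zp_True)
  have ThI: "\<exists>w. b = a \<otimes> zp w" if "a \<in> carrier G" "b \<in> carrier G" "Th b = Th a \<otimes> zp u" for a b u
  proof -
    have "Th b = Th a \<or> Th b = Th a \<otimes> z" using that Thc by (cases u) (auto simp: zp_True)
    then have "b = a \<or> b = a \<otimes> z" using Thinj that by blast
    then show ?thesis using that by (metis r_one zp_False zp_True)
  qed
  define R where "R a b \<longleftrightarrow> (\<exists>u. Th b = xx \<otimes> (Th a \<otimes> zp u))" for a b
  have R_ex: "\<exists>b. b \<in> carrier G \<and> R a b" if a: "a \<in> carrier G" for a
  proof -
    obtain b where b: "b \<in> carrier G" "Th b = xx \<otimes> Th a \<or> Th b = xx \<otimes> Th a \<otimes> z"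
      using Thsurj[of "xx \<otimes> Th a"] Thc[OF a] xc by auto
    then have "Th b = xx \<otimes> (Th a \<otimes> zp False) \<or> Th b = xx \<otimes> (Th a \<otimes> zp True)"
      using Thc[OF a] xc zc by (auto simp: zp_True m_assoc)
    then show ?thesis unfolding R_def using b by blast
  qed
  have R_uniq: "cls b = cls b'" if asm: "a \<in> carrier G" "b \<in> carrier G" "b' \<in> carrier G" "R a b" "R a b'" for a b b'
  proof -
    obtain u where u: "Th b = xx \<otimes> (Th a \<otimes> zp u)" using asm(4) unfolding R_def by blast
    obtain v where v: "Th b' = xx \<otimes> (Th a \<otimes> zp v)" using asm(5) unfolding R_def by blast
    have aG: "Th a \<in> carrier G" using Thc asm(1) by blast
    have "Th b \<otimes> zp (u \<noteq> v) = xx \<otimes> (Th a \<otimes> (zp u \<otimes> zp (u \<noteq> v)))"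
      unfolding u using aG xc by (simp add: m_assoc del: zp_mult)
    also have "\<dots> = Th b'" unfolding v by (cases u; cases v; simp)
    finally have "Th b' = Th b \<otimes> zp (u \<noteq> v)" by simp
    then obtain w where "b' = b \<otimes> zp w" using ThI asm(2,3) by blast
    then show ?thesis using cls_eq asm(2,3) by blast
  qed
  have R_sym: "R b a" if asm: "a \<in> carrier G" "b \<in> carrier G" "R a b" for a b
  proof -
    obtain u where u: "Th b = xx \<otimes> (Th a \<otimes> zp u)" using asm(3) unfolding R_def by blast
    have "xx \<otimes> (Th b \<otimes> zp (\<not> u)) = xx \<otimes> xx \<otimes> (Th a \<otimes> (zp u \<otimes> zp (\<not> u)))"
      using u asm Thc xc by (simp add: m_assoc)
    also have "\<dots> = z \<otimes> (Th a \<otimes> z)" using XX zc by (cases u) (simp_all add: zp_True)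
    also have "\<dots> = Th a \<otimes> z \<otimes> z" using zcomm[OF Thc[OF asm(1)]] Thc[OF asm(1)] zc by (simp add: m_assoc)
    also have "\<dots> = Th a" using Thc[OF asm(1)] zc zz by (simp add: m_assoc)
    finally show ?thesis unfolding R_def by metis
  qed
  have R_z: "R a b = R (a \<otimes> zp w) b" if "a \<in> carrier G" for a b w
    unfolding R_def using ThZ that by simp
  define A where "A = cls ` carrier G"
  define rep where "rep C = (SOME a. a \<in> C)" for C :: "'a set"
  have rep: "\<exists>u. rep (cls a) = a \<otimes> zp u" "rep (cls a) \<in> carrier G" if "a \<in> carrier G" for a
  proof -
    have "rep (cls a) \<in> cls a" unfolding rep_def cls_def by (rule someI[of _ a]) blast
    then show "\<exists>u. rep (cls a) = a \<otimes> zp u" unfolding cls_def using that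
      by (metis insertE r_one singletonD zp_False zp_True)
    then show "rep (cls a) \<in> carrier G" using that by auto
  qed
  define i1 where "i1 C = cls (rep C \<otimes> xx)" for C
  define i2 where "i2 C = cls (SOME b. b \<in> carrier G \<and> R (rep C) b)" for C
  have i1a: "i1 (cls a) = cls (a \<otimes> xx)" if a: "a \<in> carrier G" for a
  proof -
    obtain u where u: "rep (cls a) = a \<otimes> zp u" using rep[OF a] by blast
    have "rep (cls a) \<otimes> xx = a \<otimes> xx \<otimes> zp u" using u a xc by (simp add: m_assoc zp_comm)
    then have "cls (a \<otimes> xx) = cls (rep (cls a) \<otimes> xx)"
      using cls_eq[of "a \<otimes> xx" "rep (cls a) \<otimes> xx"] a xc rep(2)[OF a] by blast
    then show ?thesis unfolding i1_def by simp
  qed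
  have i2a: "i2 (cls a) = cls b" if a: "a \<in> carrier G" and b: "b \<in> carrier G" "R a b" for a b
  proof -
    define b0 where "b0 = (SOME b. b \<in> carrier G \<and> R (rep (cls a)) b)"
    obtain u where u: "rep (cls a) = a \<otimes> zp u" using rep[OF a] by blast
    have "b0 \<in> carrier G \<and> R (rep (cls a)) b0" unfolding b0_def
      using R_ex[OF rep(2)[OF a]] by (rule someI_ex)
    then have b0: "b0 \<in> carrier G" "R (a \<otimes> zp u) b0" using u by auto
    then have "R a b0" using R_z[OF a, of b0 u] by blast
    note b0 = b0(1) this
    then have "cls b0 = cls b" using R_uniq a b b0 by blast
    then show ?thesis unfolding i2_def b0_def by simp
  qed
  have clsG: "cls a \<noteq> cls (a \<otimes> xx)" "cls a \<noteq> cls (a \<otimes> zp u \<otimes> xx)" if a: "a \<in> carrier G" for a u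
  proof -
    have ne: "a \<otimes> xx \<noteq> a \<otimes> zp w" for w
    proof
      assume "a \<otimes> xx = a \<otimes> zp w"
      then have "xx = zp w" using a xc by simp
      then show False using X1 Xz by (cases w) (auto simp: zp_True)
    qed
    show "cls a \<noteq> cls (a \<otimes> xx)" using cls_eq[of a "a \<otimes> xx"] a xc ne by auto
    show "cls a \<noteq> cls (a \<otimes> zp u \<otimes> xx)"
    proof
      assume "cls a = cls (a \<otimes> zp u \<otimes> xx)"
      then obtain w where "a \<otimes> zp u \<otimes> xx = a \<otimes> zp w" using cls_eq a xc by (meson m_closed zp_closed)
      then have e: "xx \<otimes> zp u = zp w" using a xc by (simp add: m_assoc zp_comm)
      have "xx = xx \<otimes> zp u \<otimes> zp u" using xc by (simp add: m_assoc)
      also have "\<dots> = zp (w \<noteq> u)" using e by simp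
      finally have "a \<otimes> xx = a \<otimes> zp (w \<noteq> u)" by simp
      then show False using ne by blast
    qed
  qed
  have finA: "finite A" using fin A_def by simp
  have I1: "\<forall>p\<in>A. i1 p \<in> A \<and> i1 p \<noteq> p \<and> i1 (i1 p) = p"
  proof
    fix p assume "p \<in> A"
    then obtain a where a: "a \<in> carrier G" and p: "p = cls a" using A_def by blast
    have "i1 p = cls (a \<otimes> xx)" using i1a a p by simp
    moreover have "i1 (i1 p) = cls a"
    proof -
      have "i1 (i1 p) = cls (a \<otimes> xx \<otimes> xx)" using i1a a xc \<open>i1 p = cls (a \<otimes> xx)\<close> by simp
      also have "\<dots> = cls (a \<otimes> zp True)" using XX a xc by (simp add: m_assoc zp_True)
      also have "\<dots> = cls a" using cls_eq[of a "a \<otimes> zp True"] a by auto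
      finally show ?thesis .
    qed
    moreover have "cls (a \<otimes> xx) \<noteq> cls a" using clsG(1)[OF a] by metis
    ultimately show "i1 p \<in> A \<and> i1 p \<noteq> p \<and> i1 (i1 p) = p"
      using a xc p A_def by auto
  qed
  have I2: "\<forall>p\<in>A. i2 p \<in> A \<and> i2 p \<noteq> p \<and> i2 (i2 p) = p"
  proof
    fix p assume "p \<in> A"
    then obtain a where a: "a \<in> carrier G" and p: "p = cls a" using A_def by blast
    obtain b where b: "b \<in> carrier G" "R a b" using R_ex[OF a] by blast
    have e1: "i2 p = cls b" using i2a a b p by simp
    have e2: "i2 (i2 p) = cls a" using e1 i2a[OF b(1) a R_sym[OF a b]] by simp
    have ne: "cls b \<noteq> cls a"
    proof
      assume "cls b = cls a"
      then obtain w where w: "a = b \<otimes> zp w" using cls_eq b a by blast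
      obtain u where u: "Th b = xx \<otimes> (Th a \<otimes> zp u)" using b(2) unfolding R_def by blast
      have "Th b = Th a" using w ThZ b by simp
      then have "\<one> \<otimes> Th a = (xx \<otimes> zp u) \<otimes> Th a" using u a Thc xc by (simp add: m_assoc zp_comm)
      then have "\<one> = xx \<otimes> zp u" using a Thc xc by (metis m_closed one_closed right_cancel zp_closed)
      then have "zp u = xx \<otimes> zp u \<otimes> zp u" using xc by simp
      then have "zp u = xx" using xc by (simp add: m_assoc)
      then show False using X1 Xz by (cases u) (auto simp: zp_True)
    qed
    show "i2 p \<in> A \<and> i2 p \<noteq> p \<and> i2 (i2 p) = p" using e1 e2 ne b p A_def by auto
  qed
  obtain \<sigma> :: "'a set \<Rightarrow> bool" where sg: "\<forall>p\<in>A. \<sigma> (i1 p) \<noteq> \<sigma> p \<and> \<sigma> (i2 p) \<noteq> \<sigma> p"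
    using two_inv_coloring[OF finA I1 I2] by blast
  define col where "col a = \<sigma> (cls a)" for a
  have c1: "\<forall>a\<in>carrier G. col (a \<otimes> z) = col a"
  proof
    fix a assume a: "a \<in> carrier G"
    have "cls a = cls (a \<otimes> zp True)" using cls_eq[of a "a \<otimes> zp True"] a by auto
    then have "cls (a \<otimes> z) = cls a" by (simp add: zp_True)
    then show "col (a \<otimes> z) = col a" unfolding col_def by simp
  qed
  have c2: "\<forall>a\<in>carrier G. col (a \<otimes> xx) = (\<not> col a)"
  proof
    fix a assume a: "a \<in> carrier G"
    have "cls a \<in> A" using a A_def by blast
    then have "\<sigma> (i1 (cls a)) \<noteq> \<sigma> (cls a)" using sg by blast
    then show "col (a \<otimes> xx) = (\<not> col a)" unfolding col_def using i1a[OF a] by simp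
  qed
  have c3: "\<forall>a\<in>carrier G. \<forall>b\<in>carrier G. (Th b = xx \<otimes> Th a \<or> Th b = xx \<otimes> Th a \<otimes> z) \<longrightarrow> col b = (\<not> col a)"
  proof (intro ballI impI)
    fix a b assume a: "a \<in> carrier G" and b: "b \<in> carrier G" and e: "Th b = xx \<otimes> Th a \<or> Th b = xx \<otimes> Th a \<otimes> z"
    have "Th b = xx \<otimes> (Th a \<otimes> zp False) \<or> Th b = xx \<otimes> (Th a \<otimes> zp True)"
      using e Thc[OF a] xc zc by (auto simp: zp_True m_assoc)
    then have "R a b" unfolding R_def by blast
    then have "i2 (cls a) = cls b" using i2a a b by blast
    moreover have "cls a \<in> A" using a A_def by blast
    ultimately have "\<sigma> (cls b) \<noteq> \<sigma> (cls a)" using sg by metis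
    then show "col b = (\<not> col a)" unfolding col_def by simp
  qed
  show ?thesis using c1 c2 c3 by blast
qed


lemma cls_eq': "a \<in> carrier G \<Longrightarrow> b \<in> carrier G \<Longrightarrow> (cls a = cls b) = (b = a \<or> b = a \<otimes> z)"
proof -
  assume a: "a \<in> carrier G" and b: "b \<in> carrier G"
  have "(\<exists>u. b = a \<otimes> zp u) = (b = a \<or> b = a \<otimes> z)"
  proof
    assume "\<exists>u. b = a \<otimes> zp u"
    then obtain u where "b = a \<otimes> zp u" by blast
    then show "b = a \<or> b = a \<otimes> z" using a by (cases u) (auto simp: zp_True)
  next
    assume "b = a \<or> b = a \<otimes> z"
    then show "\<exists>u. b = a \<otimes> zp u"
    proof
      assume "b = a" then have "b = a \<otimes> zp False" using a by simp
      then show ?thesis by blast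
    next
      assume "b = a \<otimes> z" then have "b = a \<otimes> zp True" by (simp add: zp_True)
      then show ?thesis by blast
    qed
  qed
  then show ?thesis using cls_eq[OF a b] by simp
qed

lemma inv_z: "inv z = z" using zz zc by (simp add: inv_equality)

lemma xx_exists: assumes fin: "finite (carrier G)" and d4: "4 dvd order G"
  shows "\<exists>x\<in>carrier G. x \<noteq> \<one> \<and> x \<noteq> z \<and> (x \<otimes> x = \<one> \<or> x \<otimes> x = z)"
proof (rule ccontr)
  assume H: "\<not> ?thesis"
  define E where "E = carrier G - {\<one>, z}"
  define B where "B g = {g, inv g, g \<otimes> z, inv g \<otimes> z}" for g
  have sq: "g \<otimes> g \<noteq> \<one>" "g \<otimes> g \<noteq> z" if "g \<in> E" for g using H that E_def by auto
  have BE: "B g \<subseteq> E" if g: "g \<in> E" for g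
  proof -
    have gG: "g \<in> carrier G" "g \<noteq> \<one>" "g \<noteq> z" using g E_def by auto
    have "inv g \<noteq> \<one>" using gG by (metis inv_inv one_closed inv_one)
    moreover have "inv g \<noteq> z" using gG inv_z zc by (metis inv_inv)
    moreover have "g \<otimes> z \<noteq> \<one>" using gG zc zz by (metis inv_z inv_equality r_inv)
    moreover have "g \<otimes> z \<noteq> z" using gG zc by (metis l_one right_cancel one_closed)
    moreover have "inv g \<otimes> z \<noteq> \<one>" using gG zc inv_z by (metis inv_closed inv_equality inv_inv r_inv)
    moreover have "inv g \<otimes> z \<noteq> z"
    proof
      assume "inv g \<otimes> z = z"
      then have "inv g \<otimes> z = \<one> \<otimes> z" using zc by simp
      then have "inv g = \<one>" using gG zc by (simp del: l_one)
      then show False using gG \<open>inv g \<noteq> \<one>\<close> by simp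
    qed
    ultimately show ?thesis unfolding B_def E_def using gG zc by auto
  qed
  have cardB: "card (B g) = 4" if g: "g \<in> E" for g
  proof -
    have gG: "g \<in> carrier G" using g E_def by auto
    have igG: "inv g \<in> carrier G" using gG by simp
    have d1: "g \<noteq> inv g"
    proof
      assume "g = inv g" then have "g \<otimes> g = \<one>" using gG by (metis r_inv)
      then show False using sq[OF g] by blast
    qed
    have d2: "g \<noteq> g \<otimes> z" using gG zc z1 by (metis r_one l_cancel one_closed)
    have d3: "g \<noteq> inv g \<otimes> z"
    proof
      assume e: "g = inv g \<otimes> z"
      have "g \<otimes> g = g \<otimes> (inv g \<otimes> z)" using e by (rule arg_cong)
      also have "\<dots> = z" using gG zc by (simp add: m_assoc[symmetric])
      finally have "g \<otimes> g = z" .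
      then show False using sq[OF g] by blast
    qed
    have d4: "inv g \<noteq> g \<otimes> z"
    proof
      assume e: "inv g = g \<otimes> z"
      have "\<one> = g \<otimes> inv g" using gG by simp
      also have "\<dots> = g \<otimes> (g \<otimes> z)" using e by simp
      finally have "\<one> \<otimes> z = g \<otimes> (g \<otimes> z) \<otimes> z" by simp
      then have "z = g \<otimes> g" using gG zc zz by (simp add: m_assoc)
      then show False using sq[OF g] by metis
    qed
    have d5: "inv g \<noteq> inv g \<otimes> z" using igG zc z1 by (metis r_one l_cancel one_closed)
    have d6: "g \<otimes> z \<noteq> inv g \<otimes> z" using d1 gG zc by simp
    show ?thesis unfolding B_def using d1 d2 d3 d4 d5 d6 by simp
  qed
  have Bsame: "B h = B g" if g: "g \<in> carrier G" and h: "h \<in> B g" for g h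
  proof -
    have i1: "inv (g \<otimes> z) = inv g \<otimes> z" using g zc inv_z zcomm by (simp add: inv_mult_group)
    have i2: "inv (inv g \<otimes> z) = g \<otimes> z" using g zc inv_z zcomm by (simp add: inv_mult_group)
    have zz': "x \<otimes> z \<otimes> z = x" if "x \<in> carrier G" for x using that zc zz by (simp add: m_assoc)
    from h consider "h = g" | "h = inv g" | "h = g \<otimes> z" | "h = inv g \<otimes> z" unfolding B_def by blast
    then show ?thesis
    proof cases
      case 1 then show ?thesis by simp
    next
      case 2 then show ?thesis unfolding B_def using g by auto
    next
      case 3 then show ?thesis unfolding B_def using g i1 zz'[of g] zz'[of "inv g"] by auto
    next
      case 4 then show ?thesis unfolding B_def using g i2 zz'[of g] zz'[of "inv g"] by auto
    qed
  qed
  define C where "C = B ` E"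
  have UC: "\<Union>C = E"
  proof
    show "\<Union>C \<subseteq> E" using BE C_def by auto
    show "E \<subseteq> \<Union>C" unfolding C_def B_def by blast
  qed
  have finE: "finite E" using fin E_def by auto
  have "4 * card C = card (\<Union>C)"
  proof (rule card_partition)
    show "finite C" using finE C_def by simp
    show "finite (\<Union>C)" using UC finE by simp
    show "card c = 4" if "c \<in> C" for c using cardB C_def that by auto
    show "c1 \<inter> c2 = {}" if c: "c1 \<in> C" "c2 \<in> C" "c1 \<noteq> c2" for c1 c2
    proof -
      obtain g1 where g1: "g1 \<in> E" "c1 = B g1" using c C_def by blast
      obtain g2 where g2: "g2 \<in> E" "c2 = B g2" using c C_def by blast
      show "c1 \<inter> c2 = {}"
      proof (rule ccontr)
        assume "c1 \<inter> c2 \<noteq> {}"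
        then obtain x where x: "x \<in> B g1" "x \<in> B g2" using g1 g2 by blast
        have "B x = B g1" using Bsame x(1) g1 E_def by blast
        moreover have "B x = B g2" using Bsame x(2) g2 E_def by blast
        ultimately show False using c g1 g2 by simp
      qed
    qed
  qed
  then have cE: "4 * card C = card E" using UC by simp
  have "card E = card (carrier G) - 2"
  proof -
    have "card {\<one>, z} = 2" using z1 by simp
    moreover have "{\<one>, z} \<subseteq> carrier G" using zc by simp
    ultimately show ?thesis unfolding E_def using fin by (simp add: card_Diff_subset)
  qed
  moreover have "card (carrier G) \<ge> 2"
  proof -
    have "card {\<one>, z} \<le> card (carrier G)" using fin zc by (intro card_mono) auto
    then show ?thesis using z1 by simp
  qed
  ultimately show False using cE d4 unfolding order_def by presburger
qed

lemma Th_exists: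
  assumes nor: "{\<one>, z} \<lhd> G" and cm: "complete_mapping (G Mod {\<one>, z}) \<theta>"
  shows "\<exists>Th. (\<forall>a\<in>carrier G. Th a \<in> carrier G) \<and> (\<forall>a\<in>carrier G. Th (a \<otimes> z) = Th a) \<and>
    (\<forall>a\<in>carrier G. \<forall>b\<in>carrier G. (Th b = Th a \<or> Th b = Th a \<otimes> z) \<longrightarrow> (b = a \<or> b = a \<otimes> z)) \<and>
    (\<forall>a\<in>carrier G. \<forall>b\<in>carrier G. (b \<otimes> Th b = a \<otimes> Th a \<or> b \<otimes> Th b = a \<otimes> Th a \<otimes> z) \<longrightarrow> (b = a \<or> b = a \<otimes> z)) \<and>
    (\<forall>c\<in>carrier G. \<exists>a\<in>carrier G. Th a = c \<or> Th a = c \<otimes> z)"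
proof -
  define N where "N = {\<one>, z}"
  have rc: "N #> a = cls a" if "a \<in> carrier G" for a
    unfolding N_def cls_def r_coset_def using that zcomm zc by auto
  have RC: "rcosets N = cls ` carrier G" unfolding RCOSETS_def using rc by auto
  have carQ: "carrier (G Mod N) = cls ` carrier G" using RC by (simp add: FactGroup_def)
  have mulQ: "x \<otimes>\<^bsub>G Mod N\<^esub> y = x <#> y" for x y by (simp add: FactGroup_def)
  have csum: "cls a <#> cls b = cls (a \<otimes> b)" if "a \<in> carrier G" "b \<in> carrier G" for a b
    using normal.rcos_sum[OF nor[folded N_def]] rc that by (metis m_closed)
  have b1: "bij_betw \<theta> (cls ` carrier G) (cls ` carrier G)"
    and b2: "bij_betw (\<lambda>C. C <#> \<theta> C) (cls ` carrier G) (cls ` carrier G)"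
    using cm unfolding complete_mapping_def carQ[unfolded N_def] mulQ[unfolded N_def] by auto
  define Th where "Th a = (SOME b. b \<in> carrier G \<and> \<theta> (cls a) = cls b)" for a
  have Th: "Th a \<in> carrier G \<and> \<theta> (cls a) = cls (Th a)" if a: "a \<in> carrier G" for a
  proof -
    have "\<theta> (cls a) \<in> cls ` carrier G" using b1 a by (auto simp: bij_betw_def)
    then have "\<exists>b. b \<in> carrier G \<and> \<theta> (cls a) = cls b" by blast
    then show ?thesis unfolding Th_def by (rule someI_ex)
  qed
  have clsz: "cls (a \<otimes> z) = cls a" if "a \<in> carrier G" for a
    using cls_eq'[of a "a \<otimes> z"] that zc by auto
  have T1: "\<forall>a\<in>carrier G. Th a \<in> carrier G" using Th by blast
  have T2: "\<forall>a\<in>carrier G. Th (a \<otimes> z) = Th a" unfolding Th_def using clsz by simp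
  have T3: "\<forall>a\<in>carrier G. \<forall>b\<in>carrier G. (Th b = Th a \<or> Th b = Th a \<otimes> z) \<longrightarrow> (b = a \<or> b = a \<otimes> z)"
  proof (intro ballI impI)
    fix a b assume a: "a \<in> carrier G" and b: "b \<in> carrier G" and e: "Th b = Th a \<or> Th b = Th a \<otimes> z"
    have "cls (Th a) = cls (Th b)" using cls_eq' Th a b e by blast
    then have "\<theta> (cls a) = \<theta> (cls b)" using Th a b by simp
    then have "cls a = cls b" using b1 a b by (auto simp: bij_betw_def inj_on_def)
    then show "b = a \<or> b = a \<otimes> z" using cls_eq' a b by blast
  qed
  have T4: "\<forall>a\<in>carrier G. \<forall>b\<in>carrier G. (b \<otimes> Th b = a \<otimes> Th a \<or> b \<otimes> Th b = a \<otimes> Th a \<otimes> z) \<longrightarrow> (b = a \<or> b = a \<otimes> z)"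
  proof (intro ballI impI)
    fix a b assume a: "a \<in> carrier G" and b: "b \<in> carrier G" and e: "b \<otimes> Th b = a \<otimes> Th a \<or> b \<otimes> Th b = a \<otimes> Th a \<otimes> z"
    have "cls (a \<otimes> Th a) = cls (b \<otimes> Th b)" using cls_eq' Th a b e by (meson m_closed)
    then have "cls a <#> \<theta> (cls a) = cls b <#> \<theta> (cls b)" using Th a b csum by simp
    then have "cls a = cls b" using b2 a b by (auto simp: bij_betw_def inj_on_def)
    then show "b = a \<or> b = a \<otimes> z" using cls_eq' a b by blast
  qed
  have T5: "\<forall>c\<in>carrier G. \<exists>a\<in>carrier G. Th a = c \<or> Th a = c \<otimes> z"
  proof
    fix c assume c: "c \<in> carrier G"
    have "cls c \<in> \<theta> ` (cls ` carrier G)" using b1 c by (auto simp: bij_betw_def)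
    then obtain a where a: "a \<in> carrier G" "cls c = \<theta> (cls a)" by blast
    then have "cls c = cls (Th a)" using Th by simp
    then show "\<exists>a\<in>carrier G. Th a = c \<or> Th a = c \<otimes> z" using cls_eq' c Th a by blast
  qed
  show ?thesis using T1 T2 T3 T4 T5 by blast
qed


end

lemma cyclic_two:
  assumes grp: "group G" and sub: "subgroup N G" and N: "N = {\<one>\<^bsub>G\<^esub>, z}" and zN: "z \<in> carrier G"
  shows "cyclic_group (G\<lparr>carrier := N\<rparr>)"
proof -
  define H where "H = G\<lparr>carrier := N\<rparr>"
  have gH: "group H" unfolding H_def using subgroup.subgroup_is_group[OF sub grp] .
  have cH: "carrier H = N" unfolding H_def by simp
  have oH: "\<one>\<^bsub>H\<^esub> = \<one>\<^bsub>G\<^esub>" unfolding H_def by simp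
  have zH: "z \<in> carrier H" using cH N by simp
  have gen: "generate H (carrier H \<inter> {z}) = N"
  proof
    show "generate H (carrier H \<inter> {z}) \<subseteq> N"
      using group.generate_incl[OF gH, of "carrier H \<inter> {z}"] cH by blast
    show "N \<subseteq> generate H (carrier H \<inter> {z})"
    proof
      fix x assume "x \<in> N"
      then have "x = \<one>\<^bsub>H\<^esub> \<or> x = z" using N oH by auto
      then show "x \<in> generate H (carrier H \<inter> {z})"
        using generate.one[of H] generate.incl[of z "carrier H \<inter> {z}" H] zH by auto
    qed
  qed
  have "subgroup_generated H {z} = H"
    unfolding subgroup_generated_def gen unfolding H_def by simp
  then show ?thesis unfolding cyclic_group_def H_def[symmetric] using zH by blast
qed

lemma (in group) prop_main:
  assumes "finite (carrier G)" and "good_group G"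
    and "N \<lhd> G" and "card N = 2"
    and "has_complete_mapping (G Mod N)"
  shows "has_complete_mapping G"
proof -
  have fin: "finite (carrier G)" by fact
  have nor: "N \<lhd> G" by fact
  have sub: "subgroup N G" using nor normal_imp_subgroup by blast
  have oneN: "\<one> \<in> N" using sub subgroup.one_closed by blast
  obtain x y where xy: "N = {x, y}" "x \<noteq> y" using \<open>card N = 2\<close> card_2_iff by metis
  obtain z where Nz: "N = {\<one>, z}" and z1: "z \<noteq> \<one>"
  proof (cases "x = \<one>")
    case True then show ?thesis using that xy by blast
  next
    case False then have "y = \<one>" using oneN xy by auto
    then show ?thesis using that xy by blast
  qed
  have zN: "z \<in> N" using Nz by simp
  have zc: "z \<in> carrier G" using subgroup.subset[OF sub] zN by blast
  have zz: "z \<otimes> z = \<one>"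
  proof -
    have "z \<otimes> z \<in> N" using subgroup.m_closed[OF sub zN zN] .
    moreover have "z \<otimes> z \<noteq> z"
    proof
      assume "z \<otimes> z = z"
      then have "z \<otimes> z = \<one> \<otimes> z" using zc by simp
      then show False using zc z1 by (simp del: l_one)
    qed
    ultimately show ?thesis using Nz by auto
  qed
  have zcomm: "a \<otimes> z = z \<otimes> a" if a: "a \<in> carrier G" for a
  proof -
    have "a \<otimes> z \<otimes> inv a \<in> N" using normal.inv_op_closed2[OF nor a] Nz by simp
    moreover have "a \<otimes> z \<otimes> inv a \<noteq> \<one>"
    proof
      assume "a \<otimes> z \<otimes> inv a = \<one>"
      then have "a \<otimes> z \<otimes> inv a \<otimes> a = a" using a by simp
      then have "a \<otimes> z = a \<otimes> \<one>" using a zc by (simp add: m_assoc)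
      then show False using a zc z1 by (simp del: r_one)
    qed
    ultimately have "a \<otimes> z \<otimes> inv a = z" using Nz by auto
    then have "a \<otimes> z \<otimes> inv a \<otimes> a = z \<otimes> a" by simp
    then show ?thesis using a zc by (simp add: m_assoc)
  qed
  have zg: "zgrp G z"
  proof (rule zgrp.intro[OF is_group], rule zgrp_axioms.intro)
    show "z \<in> carrier G" "z \<noteq> \<one>" "z \<otimes> z = \<one>" by (fact zc, fact z1, fact zz)
    show "\<And>a. a \<in> carrier G \<Longrightarrow> a \<otimes> z = z \<otimes> a" by (rule zcomm)
  qed
  interpret zgrp G z by (rule zg)
  have d4: "4 dvd order G"
  proof (rule ccontr)
    assume n4: "\<not> 4 dvd order G"
    have "card (rcosets N) * card N = order G" using lagrange[OF sub] .
    then have d2: "2 dvd order G" using \<open>card N = 2\<close> by (metis dvd_triv_right)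
    have "sylow2_subgroup G N"
      unfolding sylow2_subgroup_def using sub \<open>card N = 2\<close> d2 n4
      by (intro conjI exI[of _ 1]) auto
    then have "N = {\<one>} \<or> \<not> cyclic_group (G\<lparr>carrier := N\<rparr>)"
      using \<open>good_group G\<close> unfolding good_group_def by blast
    moreover have "N \<noteq> {\<one>}" using Nz z1 by auto
    moreover have "cyclic_group (G\<lparr>carrier := N\<rparr>)"
      using cyclic_two[OF is_group sub Nz zc] .
    ultimately show False by blast
  qed
  obtain xx where xx: "xx \<in> carrier G" "xx \<noteq> \<one>" "xx \<noteq> z" "xx \<otimes> xx = \<one> \<or> xx \<otimes> xx = z"
    using xx_exists[OF fin d4] by blast
  obtain \<theta> where th: "complete_mapping (G Mod {\<one>, z}) \<theta>"
    using \<open>has_complete_mapping (G Mod N)\<close> Nz unfolding has_complete_mapping_def by blast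
  obtain Th where T: "\<forall>a\<in>carrier G. Th a \<in> carrier G" "\<forall>a\<in>carrier G. Th (a \<otimes> z) = Th a"
    "\<forall>a\<in>carrier G. \<forall>b\<in>carrier G. (Th b = Th a \<or> Th b = Th a \<otimes> z) \<longrightarrow> (b = a \<or> b = a \<otimes> z)"
    "\<forall>a\<in>carrier G. \<forall>b\<in>carrier G. (b \<otimes> Th b = a \<otimes> Th a \<or> b \<otimes> Th b = a \<otimes> Th a \<otimes> z) \<longrightarrow> (b = a \<or> b = a \<otimes> z)"
    "\<forall>c\<in>carrier G. \<exists>a\<in>carrier G. Th a = c \<or> Th a = c \<otimes> z"
  proof -
    have nor': "{\<one>, z} \<lhd> G" using nor Nz by simp
    note ex = Th_exists[OF nor' th]
    from ex show ?thesis by (elim exE conjE) (rule that; assumption)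
  qed
  obtain col where C: "\<forall>a\<in>carrier G. col (a \<otimes> z) = col a"
    "\<forall>a\<in>carrier G. col (a \<otimes> xx) = (col a \<noteq> (xx \<otimes> xx = z))"
    "\<forall>a\<in>carrier G. \<forall>b\<in>carrier G. (Th b = xx \<otimes> Th a \<or> Th b = xx \<otimes> Th a \<otimes> z) \<longrightarrow> col b = (col a \<noteq> (xx \<otimes> xx = z))"
  proof (cases "xx \<otimes> xx = z")
    case True
    obtain col where c: "\<forall>a\<in>carrier G. col (a \<otimes> z) = col a" "\<forall>a\<in>carrier G. col (a \<otimes> xx) = (\<not> col a)"
      "\<forall>a\<in>carrier G. \<forall>b\<in>carrier G. (Th b = xx \<otimes> Th a \<or> Th b = xx \<otimes> Th a \<otimes> z) \<longrightarrow> col b = (\<not> col a)"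
    proof -
      have Thc: "\<And>a. a \<in> carrier G \<Longrightarrow> Th a \<in> carrier G" using T(1) by blast
      have Thz: "\<And>a. a \<in> carrier G \<Longrightarrow> Th (a \<otimes> z) = Th a" using T(2) by blast
      have Thi: "\<And>a b. a \<in> carrier G \<Longrightarrow> b \<in> carrier G \<Longrightarrow>
        Th b = Th a \<or> Th b = Th a \<otimes> z \<Longrightarrow> b = a \<or> b = a \<otimes> z" using T(3) by blast
      have Ths: "\<And>c. c \<in> carrier G \<Longrightarrow> \<exists>a\<in>carrier G. Th a = c \<or> Th a = c \<otimes> z" using T(5) by blast
      have ex: "\<exists>col. (\<forall>a\<in>carrier G. col (a \<otimes> z) = col a) \<and> (\<forall>a\<in>carrier G. col (a \<otimes> xx) = (\<not> col a)) \<and>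
     (\<forall>a\<in>carrier G. \<forall>b\<in>carrier G. (Th b = xx \<otimes> Th a \<or> Th b = xx \<otimes> Th a \<otimes> z) \<longrightarrow> col b = (\<not> col a))"
        apply (rule col_exists[where xx=xx and Th=Th])
        apply (rule fin)
        apply (rule xx(1))
        apply (rule xx(2))
        apply (rule xx(3))
        apply (rule True)
        apply (erule Thc)
        apply (erule Thz)
        apply (rule Thi; assumption)
        apply (erule Ths)
        done
      from ex show ?thesis by (elim exE conjE) (rule that; assumption)
    qed
    show ?thesis by (rule that[of col]) (use c True in auto)
  next
    case False
    show ?thesis by (rule that[of "\<lambda>_. False"]) (use False in auto)
  qed
  have cm: "cmx G z xx Th col"
  proof (rule cmx.intro[OF zg], rule cmx_axioms.intro)
    show "finite (carrier G)" by (rule fin)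
    show "xx \<in> carrier G" by (rule xx(1))
    show "xx \<noteq> \<one>" by (rule xx(2))
    show "xx \<noteq> z" by (rule xx(3))
    show "xx \<otimes> xx = \<one> \<or> xx \<otimes> xx = z" by (rule xx(4))
    show "\<And>a. a \<in> carrier G \<Longrightarrow> Th a \<in> carrier G" using T(1) by blast
    show "\<And>a. a \<in> carrier G \<Longrightarrow> Th (a \<otimes> z) = Th a" using T(2) by blast
    show "\<And>a b. a \<in> carrier G \<Longrightarrow> b \<in> carrier G \<Longrightarrow>
        Th b = Th a \<or> Th b = Th a \<otimes> z \<Longrightarrow> b = a \<or> b = a \<otimes> z" using T(3) by blast
    show "\<And>a b. a \<in> carrier G \<Longrightarrow> b \<in> carrier G \<Longrightarrow>
        b \<otimes> Th b = a \<otimes> Th a \<or> b \<otimes> Th b = a \<otimes> Th a \<otimes> z \<Longrightarrow> b = a \<or> b = a \<otimes> z" using T(4) by blast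
    show "\<And>a. a \<in> carrier G \<Longrightarrow> col (a \<otimes> z) = col a" using C(1) by blast
    show "\<And>a. a \<in> carrier G \<Longrightarrow> col (a \<otimes> xx) = (col a \<noteq> (xx \<otimes> xx = z))" using C(2) by blast
    show "\<And>a b. a \<in> carrier G \<Longrightarrow> b \<in> carrier G \<Longrightarrow>
        Th b = xx \<otimes> Th a \<or> Th b = xx \<otimes> Th a \<otimes> z \<Longrightarrow> col b = (col a \<noteq> (xx \<otimes> xx = z))"
      using C(3) by blast
  qed
  interpret cmx G z xx Th col by (rule cm)
  show ?thesis using cm_exists unfolding has_complete_mapping_def .
qed

theorem proposition2p4:
  fixes G :: "('a, 'b) monoid_scheme" and N :: "'a set"
  assumes "group G" and "finite (carrier G)" and "good_group G"
    and "N \<lhd> G" and "card N = 2"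
    and "has_complete_mapping (G Mod N)"
  shows "has_complete_mapping G"
  using group.prop_main[OF assms] .

end
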